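(* Consider the 2D patch scheme: $N_x\times N_y$ patches indexed $(I,J)$ on a doubly periodic macroscale lattice, each with interior points $(i,j)$, $i=1,\dots,n_x$, $j=1,\dots,n_y$, and interior values evolving by $$\partial_tu^{I,J}_{i,j}=\big[\kappa^{I,J}_{i+\frac12,j}(u^{I,J}_{i+1,j}-u^{I,J}_{i,j})+\kappa^{I,J}_{i-\frac12,j}(u^{I,J}_{i-1,j}-u^{I,J}_{i,j})\big]/d_x^2+\big[\kappa^{I,J}_{i,j+\frac12}(u^{I,J}_{i,j+1}-u^{I,J}_{i,j})+\kappa^{I,J}_{i,j-\frac12}(u^{I,J}_{i,j-1}-u^{I,J}_{i,j})\big]/d_y^2,$$ with real diffusivities satisfying $\kappa^{I,J}_{1/2,j}=\kappa^{K,J}_{n_x+1/2,j}$ for all $I,K,J,j$ and $\kappa^{I,J}_{i,1/2}=\kappa^{I,K}_{i,n_y+1/2}$ for all $I,J,K,i$. Edge values are given by $$u^{I,J}_{0,j}=\sum_K\mathcal I^{IK}_{1n_x}u^{K,J}_{n_x,j},\quad u^{I,J}_{n_x+1,j}=\sum_K\mathcal I^{IK}_{n_x1}u^{K,J}_{1,j}\ (j=1,\dots,n_y),$$ $$u^{I,J}_{i,0}=\sum_K\mathcal J^{JK}_{1n_y}u^{I,K}_{i,n_y},\quad u^{I,J}_{i,n_y+1}=\sum_K\mathcal J^{JK}_{n_y1}u^{I,K}_{i,1}\ (i=1,\dots,n_x),$$ where $\mathcal I$ are the 1D spectral or Lagrangian interpolation coefficients in $x$ (with $N_x$ patches and ratio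 $r_x=h_x/H_x$) and $\mathcal J$ those in $y$ (with $N_y$ patches and ratio $r_y=h_y/H_y$). Then the linear system $\partial_t\mathbf u=\mathcal L\mathbf u$ on all interior values has a real symmetric (self-adjoint) matrix $\mathcal L$.
   Context: 1D spectral interpolation coefficients (for $N$ patches, spacing $H$, ratio $r$, domain length $L=NH$): $\mathcal I^{IJ}_{n1}=\frac1N\sum_{k\in\mathcal K}e^{\mathrm ikH(I-J+r)}$, $\mathcal I^{IJ}_{1n}=\frac1N\sum_{k\in\mathcal K}e^{\mathrm ikH(I-J-r)}$, $\mathcal K$ a fixed finite symmetric set of integer multiples of $2\pi/L$. 1D Lagrangian interpolation coefficients of order $P$: defined by $u^I_{n+1}=u^I_1+\sum_{k=1}^P\big(\prod_{\ell=0}^{k-1}(r^2-\ell^2)\big)\frac{(2k/r)\mu\delta^{2k-1}+\delta^{2k}}{(2k)!}u^I_1=\sum_J\mathcal I^{IJ}_{n1}u^J_1$ and $u^I_{0}=u^I_n+\sum_{k=1}^P\big(\prod_{\ell=0}^{k-1}(r^2-\ell^2)\big)\frac{-(2k/r)\mu\delta^{2k-1}+\delta^{2k}}{(2k)!}u^I_n=\sum_J\mathcal I^{IJ}_{1n}u^J_n$, where $Eu^I=u^{I+1}$ cyclically, $\mu\delta^{2k-1}:=\tfrac12(E-E^{-1})(E-2+E^{-1})^{k-1}$, $\delta^{2k}:=(E-2+E^{-1})^k$. Patch widths $h_x=n_xd_x$, $h_y=n_yd_y$. *)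

theory Defs
  imports Complex_Main
begin

text \<open>Patches are indexed I = 0..N-1 (cyclically). The wavenumber set K is a finite
symmetric set of integer multiples of 2 pi / L with L = N H; we encode it by the set M of
integers m with k = 2 pi m / L.\<close>

definition spectral_n1 :: "nat \<Rightarrow> real \<Rightarrow> real \<Rightarrow> int set \<Rightarrow> nat \<Rightarrow> nat \<Rightarrow> complex" where
  "spectral_n1 N H r M I J =
     (1 / of_nat N) * (\<Sum>m\<in>M. exp (\<i> * of_real ((2 * pi * of_int m / (real N * H)) * H
                                       * (real I - real J + r))))"

definition spectral_1n :: "nat \<Rightarrow> real \<Rightarrow> real \<Rightarrow> int set \<Rightarrow> nat \<Rightarrow> nat \<Rightarrow> complex" where
  "spectral_1n N H r M I J =
     (1 / of_nat N) * (\<Sum>m\<in>M. exp (\<i> * of_real ((2 * pi * of_int m / (real N * H)) * H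
                                       * (real I - real J - r))))"

definition shiftE :: "nat \<Rightarrow> (nat \<Rightarrow> real) \<Rightarrow> (nat \<Rightarrow> real)" where
  "shiftE N u = (\<lambda>I. u ((I + 1) mod N))"

definition shiftEinv :: "nat \<Rightarrow> (nat \<Rightarrow> real) \<Rightarrow> (nat \<Rightarrow> real)" where
  "shiftEinv N u = (\<lambda>I. u ((I + N - 1) mod N))"

definition delta2 :: "nat \<Rightarrow> (nat \<Rightarrow> real) \<Rightarrow> (nat \<Rightarrow> real)" where
  "delta2 N u = (\<lambda>I. shiftE N u I - 2 * u I + shiftEinv N u I)"

text \<open>mu delta^{2k-1} = 1/2 (E - E^{-1}) (E - 2 + E^{-1})^{k-1}\<close>
definition mu_delta_odd :: "nat \<Rightarrow> nat \<Rightarrow> (nat \<Rightarrow> real) \<Rightarrow> (nat \<Rightarrow> real)" where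
  "mu_delta_odd N k u =
     (let v = (delta2 N ^^ (k - 1)) u in (\<lambda>I. (shiftE N v I - shiftEinv N v I) / 2))"

definition delta_even :: "nat \<Rightarrow> nat \<Rightarrow> (nat \<Rightarrow> real) \<Rightarrow> (nat \<Rightarrow> real)" where
  "delta_even N k u = (delta2 N ^^ k) u"

definition lagr_op_n1 :: "nat \<Rightarrow> real \<Rightarrow> nat \<Rightarrow> (nat \<Rightarrow> real) \<Rightarrow> (nat \<Rightarrow> real)" where
  "lagr_op_n1 N r P u = (\<lambda>I. u I + (\<Sum>k=1..P. (\<Prod>l<k. r\<^sup>2 - (real l)\<^sup>2) *
      ((2 * real k / r) * mu_delta_odd N k u I + delta_even N k u I) / fact (2 * k)))"

definition lagr_op_1n :: "nat \<Rightarrow> real \<Rightarrow> nat \<Rightarrow> (nat \<Rightarrow> real) \<Rightarrow> (nat \<Rightarrow> real)" where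
  "lagr_op_1n N r P u = (\<lambda>I. u I + (\<Sum>k=1..P. (\<Prod>l<k. r\<^sup>2 - (real l)\<^sup>2) *
      (- (2 * real k / r) * mu_delta_odd N k u I + delta_even N k u I) / fact (2 * k)))"

definition lagr_n1 :: "nat \<Rightarrow> real \<Rightarrow> nat \<Rightarrow> nat \<Rightarrow> nat \<Rightarrow> real" where
  "lagr_n1 N r P I J = lagr_op_n1 N r P (\<lambda>K. if K = J then 1 else 0) I"

definition lagr_1n :: "nat \<Rightarrow> real \<Rightarrow> nat \<Rightarrow> nat \<Rightarrow> nat \<Rightarrow> real" where
  "lagr_1n N r P I J = lagr_op_1n N r P (\<lambda>K. if K = J then 1 else 0) I"

definition interp_coeffs ::
  "nat \<Rightarrow> real \<Rightarrow> real \<Rightarrow> (nat \<Rightarrow> nat \<Rightarrow> complex) \<Rightarrow> (nat \<Rightarrow> nat \<Rightarrow> complex) \<Rightarrow> bool" where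
  "interp_coeffs N H r Cn1 C1n \<longleftrightarrow>
     (\<exists>M. finite M \<and> (\<forall>m\<in>M. - m \<in> M) \<and>
          Cn1 = spectral_n1 N H r M \<and> C1n = spectral_1n N H r M) \<or>
     (\<exists>P. Cn1 = (\<lambda>I J. complex_of_real (lagr_n1 N r P I J)) \<and>
          C1n = (\<lambda>I J. complex_of_real (lagr_1n N r P I J)))"

definition interior_idx :: "nat \<Rightarrow> nat \<Rightarrow> nat \<Rightarrow> nat \<Rightarrow> (nat \<times> nat \<times> nat \<times> nat) set" where
  "interior_idx Nx Ny nx ny = {(I, J, i, j). I < Nx \<and> J < Ny \<and> 1 \<le> i \<and> i \<le> nx \<and> 1 \<le> j \<and> j \<le> ny}"

text \<open>Interior values extended by the edge values given by the coupling conditions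
(corner values are never used; set to 0).\<close>
definition patch_ext ::
  "nat \<Rightarrow> nat \<Rightarrow> nat \<Rightarrow> nat \<Rightarrow>
   (nat \<Rightarrow> nat \<Rightarrow> complex) \<Rightarrow> (nat \<Rightarrow> nat \<Rightarrow> complex) \<Rightarrow>
   (nat \<Rightarrow> nat \<Rightarrow> complex) \<Rightarrow> (nat \<Rightarrow> nat \<Rightarrow> complex) \<Rightarrow>
   (nat \<times> nat \<times> nat \<times> nat \<Rightarrow> complex) \<Rightarrow> nat \<Rightarrow> nat \<Rightarrow> nat \<Rightarrow> nat \<Rightarrow> complex" where
  "patch_ext Nx Ny nx ny Ixn1 Ix1n Jyn1 Jy1n u I J i j =
     (if 1 \<le> i \<and> i \<le> nx \<and> 1 \<le> j \<and> j \<le> ny then u (I, J, i, j)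
      else if i = 0 \<and> 1 \<le> j \<and> j \<le> ny then (\<Sum>K<Nx. Ix1n I K * u (K, J, nx, j))
      else if i = nx + 1 \<and> 1 \<le> j \<and> j \<le> ny then (\<Sum>K<Nx. Ixn1 I K * u (K, J, 1, j))
      else if j = 0 \<and> 1 \<le> i \<and> i \<le> nx then (\<Sum>K<Ny. Jy1n J K * u (I, K, i, ny))
      else if j = ny + 1 \<and> 1 \<le> i \<and> i \<le> nx then (\<Sum>K<Ny. Jyn1 J K * u (I, K, i, 1))
      else 0)"

text \<open>Right-hand side of the patch scheme. kx I J i j is kappa^{I,J}_{i+1/2, j} (i = 0..nx),
ky I J i j is kappa^{I,J}_{i, j+1/2} (j = 0..ny).\<close>
definition patch_op ::
  "nat \<Rightarrow> nat \<Rightarrow> nat \<Rightarrow> nat \<Rightarrow> real \<Rightarrow> real \<Rightarrow>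
   (nat \<Rightarrow> nat \<Rightarrow> nat \<Rightarrow> nat \<Rightarrow> real) \<Rightarrow> (nat \<Rightarrow> nat \<Rightarrow> nat \<Rightarrow> nat \<Rightarrow> real) \<Rightarrow>
   (nat \<Rightarrow> nat \<Rightarrow> complex) \<Rightarrow> (nat \<Rightarrow> nat \<Rightarrow> complex) \<Rightarrow>
   (nat \<Rightarrow> nat \<Rightarrow> complex) \<Rightarrow> (nat \<Rightarrow> nat \<Rightarrow> complex) \<Rightarrow>
   (nat \<times> nat \<times> nat \<times> nat \<Rightarrow> complex) \<Rightarrow> (nat \<times> nat \<times> nat \<times> nat \<Rightarrow> complex)" where
  "patch_op Nx Ny nx ny dx dy kx ky Ixn1 Ix1n Jyn1 Jy1n u =
     (\<lambda>(I, J, i, j).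
        let w = patch_ext Nx Ny nx ny Ixn1 Ix1n Jyn1 Jy1n u I J in
        (of_real (kx I J i j) * (w (i + 1) j - w i j)
           + of_real (kx I J (i - 1) j) * (w (i - 1) j - w i j)) / of_real (dx\<^sup>2)
      + (of_real (ky I J i j) * (w i (j + 1) - w i j)
           + of_real (ky I J i (j - 1)) * (w i (j - 1) - w i j)) / of_real (dy\<^sup>2))"

definition patch_matrix ::
  "nat \<Rightarrow> nat \<Rightarrow> nat \<Rightarrow> nat \<Rightarrow> real \<Rightarrow> real \<Rightarrow>
   (nat \<Rightarrow> nat \<Rightarrow> nat \<Rightarrow> nat \<Rightarrow> real) \<Rightarrow> (nat \<Rightarrow> nat \<Rightarrow> nat \<Rightarrow> nat \<Rightarrow> real) \<Rightarrow>
   (nat \<Rightarrow> nat \<Rightarrow> complex) \<Rightarrow> (nat \<Rightarrow> nat \<Rightarrow> complex) \<Rightarrow>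
   (nat \<Rightarrow> nat \<Rightarrow> complex) \<Rightarrow> (nat \<Rightarrow> nat \<Rightarrow> complex) \<Rightarrow>
   (nat \<times> nat \<times> nat \<times> nat) \<Rightarrow> (nat \<times> nat \<times> nat \<times> nat) \<Rightarrow> complex" where
  "patch_matrix Nx Ny nx ny dx dy kx ky Ixn1 Ix1n Jyn1 Jy1n a b =
     patch_op Nx Ny nx ny dx dy kx ky Ixn1 Ix1n Jyn1 Jy1n (\<lambda>c. if c = b then 1 else 0) a"

end

theory Submission
  imports Defs
begin


definition ip :: "nat \<Rightarrow> (nat\<Rightarrow>real) \<Rightarrow> (nat\<Rightarrow>real) \<Rightarrow> real" where
  "ip N u v = (\<Sum>I<N. u I * v I)"

lemma mod_aux1: "N \<ge> 1 \<Longrightarrow> I < N \<Longrightarrow> (Suc I mod N + N - Suc 0) mod N = I"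
  by (cases "Suc I = N") (auto simp: mod_if)
lemma mod_aux2: "N \<ge> 1 \<Longrightarrow> I < N \<Longrightarrow> Suc ((I + N - Suc 0) mod N) mod N = I"
  by (cases "I = 0") (auto simp: mod_if)

lemma mod_g1: assumes "N \<ge> 1" shows "(Suc I mod N + N - Suc 0) mod N = I mod N"
proof -
  have "Suc I mod N = Suc (I mod N) mod N" by (simp add: mod_Suc_eq)
  then show ?thesis using mod_aux1[OF assms, of "I mod N"] assms by simp
qed

lemma mod_g2: assumes "N \<ge> 1" shows "Suc ((I + N - Suc 0) mod N) mod N = I mod N"
proof -
  have "(I + N - Suc 0) mod N = (I mod N + N - Suc 0) mod N"
  proof -
    have a: "I + N - Suc 0 = I + (N - Suc 0)" using assms by simp
    have b: "I mod N + N - Suc 0 = I mod N + (N - Suc 0)" using assms by simp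
    show ?thesis unfolding a b by (simp add: mod_add_left_eq)
  qed
  then show ?thesis using mod_aux2[OF assms, of "I mod N"] assms by simp
qed

lemma S1: fixes u v :: "nat \<Rightarrow> real" assumes "N \<ge> 1" shows "(\<Sum>I<N. u (Suc I mod N) * v I) = (\<Sum>I<N. u I * v ((I + N - Suc 0) mod N))"
proof (rule sum.reindex_bij_witness[of _ "\<lambda>J. (J + N - 1) mod N" "\<lambda>I. Suc I mod N"])
qed (use assms mod_aux1 mod_aux2 in auto)

lemma S2: fixes u v :: "nat \<Rightarrow> real" assumes "N \<ge> 1" shows "(\<Sum>I<N. u ((I + N - Suc 0) mod N) * v I) = (\<Sum>I<N. u I * v (Suc I mod N))"
proof -
  have "(\<Sum>I<N. u ((I + N - Suc 0) mod N) * v I) = (\<Sum>I<N. v I * u ((I + N - Suc 0) mod N))"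
    by (intro sum.cong refl mult.commute)
  also have "\<dots> = (\<Sum>I<N. v (Suc I mod N) * u I)" by (rule S1[OF assms, symmetric])
  also have "\<dots> = (\<Sum>I<N. u I * v (Suc I mod N))" by (intro sum.cong refl mult.commute)
  finally show ?thesis .
qed

lemma ip_sym: "ip N u v = ip N v u" unfolding ip_def by (simp add: mult.commute)

lemma delta2_adj: assumes "N \<ge> 1" shows "ip N (delta2 N u) v = ip N u (delta2 N v)"
proof -
  have e1: "ip N (delta2 N u) v = (\<Sum>I<N. u (Suc I mod N) * v I) - 2 * (\<Sum>I<N. u I * v I)
      + (\<Sum>I<N. u ((I + N - Suc 0) mod N) * v I)"
    unfolding ip_def delta2_def shiftE_def shiftEinv_def
    by (simp add: left_diff_distrib distrib_right sum.distrib sum_subtractf sum_distrib_left mult.assoc)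
  have e2: "ip N u (delta2 N v) = (\<Sum>I<N. u I * v (Suc I mod N)) - 2 * (\<Sum>I<N. u I * v I)
      + (\<Sum>I<N. u I * v ((I + N - Suc 0) mod N))"
    unfolding ip_def delta2_def shiftE_def shiftEinv_def
    by (simp add: right_diff_distrib distrib_left sum.distrib sum_subtractf sum_distrib_left mult.left_commute)
  show ?thesis unfolding e1 e2 S1[OF assms] S2[OF assms] by simp
qed

definition Dop :: "nat \<Rightarrow> (nat \<Rightarrow> real) \<Rightarrow> (nat \<Rightarrow> real)" where
  "Dop N u = (\<lambda>I. (shiftE N u I - shiftEinv N u I) / 2)"

lemma D_adj: assumes "N \<ge> 1" shows "ip N (Dop N u) v = - ip N u (Dop N v)"
proof -
  have e1: "ip N (Dop N u) v = ((\<Sum>I<N. u (Suc I mod N) * v I) - (\<Sum>I<N. u ((I + N - Suc 0) mod N) * v I)) / 2"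
    unfolding ip_def Dop_def shiftE_def shiftEinv_def
    by (simp add: left_diff_distrib sum_subtractf sum_divide_distrib[symmetric])
  have e2: "ip N u (Dop N v) = ((\<Sum>I<N. u I * v (Suc I mod N)) - (\<Sum>I<N. u I * v ((I + N - Suc 0) mod N))) / 2"
    unfolding ip_def Dop_def shiftE_def shiftEinv_def
    by (simp add: right_diff_distrib sum_subtractf sum_divide_distrib[symmetric])
  show ?thesis unfolding e1 e2 S1[OF assms] S2[OF assms] by (simp add: field_simps)
qed

lemma E_delta2: assumes "N \<ge> 1" shows "shiftE N (delta2 N u) = delta2 N (shiftE N u)"
  unfolding shiftE_def delta2_def shiftEinv_def using mod_g1[OF assms] mod_g2[OF assms] by auto

lemma Einv_delta2: assumes "N \<ge> 1" shows "shiftEinv N (delta2 N u) = delta2 N (shiftEinv N u)"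
  unfolding shiftE_def delta2_def shiftEinv_def using mod_g1[OF assms] mod_g2[OF assms] by auto

lemma D_delta2: assumes "N \<ge> 1" shows "Dop N (delta2 N u) = delta2 N (Dop N u)"
proof -
  have "Dop N (delta2 N u) = (\<lambda>I. (delta2 N (shiftE N u) I - delta2 N (shiftEinv N u) I) / 2)"
    unfolding Dop_def using E_delta2[OF assms] Einv_delta2[OF assms] by metis
  also have "\<dots> = delta2 N (Dop N u)"
    unfolding Dop_def delta2_def shiftE_def shiftEinv_def by (auto simp: field_simps)
  finally show ?thesis .
qed

lemma D_delta2_pow: assumes "N \<ge> 1" shows "Dop N ((delta2 N ^^ n) u) = (delta2 N ^^ n) (Dop N u)"
  by (induction n) (simp_all add: D_delta2[OF assms])

lemma delta2_pow_adj: assumes "N \<ge> 1" shows "ip N ((delta2 N ^^ n) u) v = ip N u ((delta2 N ^^ n) v)"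
proof (induction n arbitrary: v)
  case 0 then show ?case by simp
next
  case (Suc n)
  have "ip N ((delta2 N ^^ Suc n) u) v = ip N ((delta2 N ^^ n) u) (delta2 N v)"
    by (simp add: delta2_adj[OF assms])
  also have "\<dots> = ip N u ((delta2 N ^^ n) (delta2 N v))" by (rule Suc)
  also have "\<dots> = ip N u ((delta2 N ^^ Suc n) v)" by (simp add: funpow_swap1)
  finally show ?case .
qed

lemma mu_eq: "mu_delta_odd N k u = Dop N ((delta2 N ^^ (k - 1)) u)"
  unfolding mu_delta_odd_def Dop_def Let_def by simp

lemma mu_adj: assumes "N \<ge> 1" shows "ip N (mu_delta_odd N k u) v = - ip N u (mu_delta_odd N k v)"
proof -
  have "ip N (mu_delta_odd N k u) v = - ip N ((delta2 N ^^ (k - 1)) u) (Dop N v)"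
    unfolding mu_eq by (rule D_adj[OF assms])
  also have "\<dots> = - ip N u ((delta2 N ^^ (k - 1)) (Dop N v))"
    by (simp add: delta2_pow_adj[OF assms])
  also have "\<dots> = - ip N u (mu_delta_odd N k v)"
    unfolding mu_eq D_delta2_pow[OF assms] ..
  finally show ?thesis .
qed

lemma de_adj: assumes "N \<ge> 1" shows "ip N (delta_even N k u) v = ip N u (delta_even N k v)"
  unfolding delta_even_def by (rule delta2_pow_adj[OF assms])

lemma sum_pull: "(\<Sum>I<N. (c * (a * m I + d I) / f) * w I) =
   c * (a * (\<Sum>I<N. m I * w I) + (\<Sum>I<N. d I * w I)) / (f::real)"
  by (simp add: algebra_simps sum.distrib sum_distrib_left sum_divide_distrib add_divide_distrib)

lemma sum_pull2: "(\<Sum>I<N. w I * (c * (a * m I + d I) / f)) =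
   c * (a * (\<Sum>I<N. w I * m I) + (\<Sum>I<N. w I * d I)) / (f::real)"
  by (simp add: algebra_simps sum.distrib sum_distrib_left sum_divide_distrib add_divide_distrib)

lemma ip_n1: "ip N (lagr_op_n1 N r P u) v = ip N u v + (\<Sum>k=1..P. (\<Prod>l<k. r\<^sup>2 - (real l)\<^sup>2) *
      ((2 * real k / r) * ip N (mu_delta_odd N k u) v + ip N (delta_even N k u) v) / fact (2 * k))"
proof -
  have "ip N (lagr_op_n1 N r P u) v = ip N u v + (\<Sum>I<N. \<Sum>k=1..P. ((\<Prod>l<k. r\<^sup>2 - (real l)\<^sup>2) *
      ((2 * real k / r) * mu_delta_odd N k u I + delta_even N k u I) / fact (2 * k)) * v I)"
    unfolding ip_def lagr_op_n1_def by (simp add: distrib_right sum.distrib sum_distrib_right)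
  also have "\<dots> = ip N u v + (\<Sum>k=1..P. \<Sum>I<N. ((\<Prod>l<k. r\<^sup>2 - (real l)\<^sup>2) *
      ((2 * real k / r) * mu_delta_odd N k u I + delta_even N k u I) / fact (2 * k)) * v I)"
    by (subst sum.swap) (rule refl)
  also have "\<dots> = ip N u v + (\<Sum>k=1..P. (\<Prod>l<k. r\<^sup>2 - (real l)\<^sup>2) *
      ((2 * real k / r) * ip N (mu_delta_odd N k u) v + ip N (delta_even N k u) v) / fact (2 * k))"
    unfolding ip_def sum_pull ..
  finally show ?thesis .
qed

lemma ip_1n: "ip N u (lagr_op_1n N r P v) = ip N u v + (\<Sum>k=1..P. (\<Prod>l<k. r\<^sup>2 - (real l)\<^sup>2) *
      (- (2 * real k / r) * ip N u (mu_delta_odd N k v) + ip N u (delta_even N k v)) / fact (2 * k))"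
proof -
  have "ip N u (lagr_op_1n N r P v) = ip N u v + (\<Sum>I<N. \<Sum>k=1..P. u I * ((\<Prod>l<k. r\<^sup>2 - (real l)\<^sup>2) *
      (- (2 * real k / r) * mu_delta_odd N k v I + delta_even N k v I) / fact (2 * k)))"
    unfolding ip_def lagr_op_1n_def by (simp add: distrib_left sum.distrib sum_distrib_left)
  also have "\<dots> = ip N u v + (\<Sum>k=1..P. \<Sum>I<N. u I * ((\<Prod>l<k. r\<^sup>2 - (real l)\<^sup>2) *
      (- (2 * real k / r) * mu_delta_odd N k v I + delta_even N k v I) / fact (2 * k)))"
    by (subst sum.swap) (rule refl)
  also have "\<dots> = ip N u v + (\<Sum>k=1..P. (\<Prod>l<k. r\<^sup>2 - (real l)\<^sup>2) *
      (- (2 * real k / r) * ip N u (mu_delta_odd N k v) + ip N u (delta_even N k v)) / fact (2 * k))"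
    unfolding ip_def sum_pull2 ..
  finally show ?thesis .
qed

lemma lagr_adj: assumes "N \<ge> 1" shows "ip N (lagr_op_n1 N r P u) v = ip N u (lagr_op_1n N r P v)"
  unfolding ip_n1 ip_1n mu_adj[OF assms] de_adj[OF assms] by simp

lemma ip_unit: "I < N \<Longrightarrow> ip N w (\<lambda>K. if K = I then 1 else 0) = w I"
  unfolding ip_def by (simp add: if_distrib cong: if_cong)

lemma lagr_transp: assumes "N \<ge> 1" "I < N" "J < N" shows "lagr_n1 N r P I J = lagr_1n N r P J I"
proof -
  have "lagr_n1 N r P I J = ip N (lagr_op_n1 N r P (\<lambda>K. if K = J then 1 else 0)) (\<lambda>K. if K = I then 1 else 0)"
    unfolding lagr_n1_def using assms by (simp add: ip_unit)
  also have "\<dots> = ip N (\<lambda>K. if K = J then 1 else 0) (lagr_op_1n N r P (\<lambda>K. if K = I then 1 else 0))"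
    by (rule lagr_adj[OF assms(1)])
  also have "\<dots> = lagr_1n N r P J I"
    unfolding lagr_1n_def using assms by (subst ip_sym) (simp add: ip_unit)
  finally show ?thesis .
qed



lemma symsum: "finite M \<Longrightarrow> \<forall>m\<in>M. - m \<in> M \<Longrightarrow> (\<Sum>m\<in>M. f m) = (\<Sum>m\<in>M. f (- (m::int)))"
  by (rule sum.reindex_bij_witness[of _ uminus uminus]) auto

lemma spec_transp: assumes "finite M" "\<forall>m\<in>M. - m \<in> M"
  shows "spectral_n1 N H r M I K = spectral_1n N H r M K I"
  unfolding spectral_n1_def spectral_1n_def
  apply (subst symsum[OF assms, of "\<lambda>m. exp (\<i> * of_real ((2 * pi * of_int m / (real N * H)) * H * (real K - real I - r)))"])
  apply (simp add: algebra_simps)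
  done

lemma spec_real: assumes "finite M" "\<forall>m\<in>M. - m \<in> M"
  shows "spectral_n1 N H r M I K \<in> \<real>"
proof -
  define t where "t = (\<lambda>m::int. (2 * pi * of_int m / (real N * H)) * H * (real I - real K + r))"
  have t: "t (- m) = - t m" for m unfolding t_def by simp
  have e: "spectral_n1 N H r M I K = (1 / of_nat N) * (\<Sum>m\<in>M. cis (t m))"
    unfolding spectral_n1_def t_def cis_conv_exp by simp
  have "cnj (\<Sum>m\<in>M. cis (t m)) = (\<Sum>m\<in>M. cis (t (- m)))" by (simp add: cis_cnj t)
  also have "\<dots> = (\<Sum>m\<in>M. cis (t m))" by (rule symsum[OF assms, symmetric])
  finally have "(\<Sum>m\<in>M. cis (t m)) \<in> \<real>" by (simp add: Reals_cnj_iff)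
  then show ?thesis unfolding e by simp
qed



lemma sum_e: fixes f :: "nat \<Rightarrow> complex"
  assumes "K < N" shows "(\<Sum>K'<N. f K' * (if K' = K \<and> Q then 1 else 0)) = (if Q then f K else 0)"
proof -
  have "(\<lambda>K'. f K' * (if K' = K \<and> Q then 1 else 0)) = (\<lambda>K'. if K' = K then (if Q then f K else 0) else 0)"
    by auto
  then show ?thesis using assms by (simp only:) simp
qed

lemma sum_e2: fixes f :: "nat \<Rightarrow> complex"
  assumes "K < N" shows "(\<Sum>K'<N. f K' * (if P \<and> K' = K \<and> Q then 1 else 0)) = (if P \<and> Q then f K else 0)"
proof -
  have "(\<lambda>K'. f K' * (if P \<and> K' = K \<and> Q then 1 else 0)) = (\<lambda>K'. if K' = K then (if P \<and> Q then f K else 0) else 0)"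
    by auto
  then show ?thesis using assms by (simp only:) simp
qed

lemma alg: "(a::complex) * ((if c then p else 0) - z) + b * ((if c then q else 0) - z) = (if c then a * p + b * q else 0) - (a + b) * z"
  by (cases c) (simp_all add: algebra_simps)

definition F1 :: "nat \<Rightarrow> (nat \<Rightarrow> nat \<Rightarrow> real) \<Rightarrow> (nat \<Rightarrow> nat \<Rightarrow> complex) \<Rightarrow> (nat \<Rightarrow> nat \<Rightarrow> complex)
   \<Rightarrow> nat \<Rightarrow> nat \<Rightarrow> nat \<Rightarrow> nat \<Rightarrow> complex" where
  "F1 n \<kappa> A B P i Q k =
     of_real (\<kappa> P i) * (if i < n then (if P = Q \<and> k = Suc i then 1 else 0) else (if k = 1 then A P Q else 0))
   + of_real (\<kappa> P (i - 1)) * (if 1 < i then (if P = Q \<and> k = i - 1 then 1 else 0) else (if k = n then B P Q else 0))"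

context
  fixes Nx Ny nx ny :: nat and Ixn1 Ix1n Jyn1 Jy1n :: "nat \<Rightarrow> nat \<Rightarrow> complex"
    and I J i j K L k l :: nat
  assumes a: "I < Nx" "J < Ny" "1 \<le> i" "i \<le> nx" "1 \<le> j" "j \<le> ny"
    and b: "K < Nx" "L < Ny" "1 \<le> k" "k \<le> nx" "1 \<le> l" "l \<le> ny"
begin

abbreviation "w \<equiv> patch_ext Nx Ny nx ny Ixn1 Ix1n Jyn1 Jy1n (\<lambda>c. if c = (K, L, k, l) then 1 else 0) I J"

lemma wC: "w i j = (if (I, J, i, j) = (K, L, k, l) then 1 else 0)"
  unfolding patch_ext_def using a by simp

lemma wR: "w (Suc i) j = (if J = L \<and> j = l then (if i < nx then (if I = K \<and> k = Suc i then 1 else 0)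
     else (if k = 1 then Ixn1 I K else 0)) else 0)"
proof (cases "i < nx")
  case True then show ?thesis unfolding patch_ext_def using a by auto
next
  case False
  then have "i = nx" using a by simp
  then show ?thesis unfolding patch_ext_def using a b by (auto simp: sum_e)
qed

lemma wL: "w (i - 1) j = (if J = L \<and> j = l then (if 1 < i then (if I = K \<and> k = i - 1 then 1 else 0)
     else (if k = nx then Ix1n I K else 0)) else 0)"
proof (cases "1 < i")
  case True then show ?thesis unfolding patch_ext_def using a by auto
next
  case False
  then have "i = 1" using a by simp
  then show ?thesis unfolding patch_ext_def using a b by (auto simp: sum_e)
qed

lemma wU: "w i (Suc j) = (if I = K \<and> i = k then (if j < ny then (if J = L \<and> l = Suc j then 1 else 0)
     else (if l = 1 then Jyn1 J L else 0)) else 0)"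
proof (cases "j < ny")
  case True then show ?thesis unfolding patch_ext_def using a by auto
next
  case False
  then have "j = ny" using a by simp
  then show ?thesis unfolding patch_ext_def using a b by (auto simp: sum_e2)
qed

lemma wD: "w i (j - 1) = (if I = K \<and> i = k then (if 1 < j then (if J = L \<and> l = j - 1 then 1 else 0)
     else (if l = ny then Jy1n J L else 0)) else 0)"
proof (cases "1 < j")
  case True then show ?thesis unfolding patch_ext_def using a by auto
next
  case False
  then have "j = 1" using a by simp
  then show ?thesis unfolding patch_ext_def using a b by (auto simp: sum_e2)
qed

lemma formula:
  "patch_matrix Nx Ny nx ny dx dy kx ky Ixn1 Ix1n Jyn1 Jy1n (I, J, i, j) (K, L, k, l) =
    ((if J = L \<and> j = l then F1 nx (\<lambda>P i. kx P J i j) Ixn1 Ix1n I i K k else 0)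
       - of_real (kx I J i j + kx I J (i - 1) j) * (if (I, J, i, j) = (K, L, k, l) then 1 else 0)) / of_real (dx\<^sup>2)
  + ((if I = K \<and> i = k then F1 ny (\<lambda>P j. ky I P i j) Jyn1 Jy1n J j L l else 0)
       - of_real (ky I J i j + ky I J i (j - 1)) * (if (I, J, i, j) = (K, L, k, l) then 1 else 0)) / of_real (dy\<^sup>2)"
proof -
  have e: "patch_matrix Nx Ny nx ny dx dy kx ky Ixn1 Ix1n Jyn1 Jy1n (I, J, i, j) (K, L, k, l) =
     (of_real (kx I J i j) * (w (Suc i) j - w i j)
           + of_real (kx I J (i - 1) j) * (w (i - 1) j - w i j)) / of_real (dx\<^sup>2)
      + (of_real (ky I J i j) * (w i (Suc j) - w i j)
           + of_real (ky I J i (j - 1)) * (w i (j - 1) - w i j)) / of_real (dy\<^sup>2)"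
    unfolding patch_matrix_def patch_op_def Let_def by simp
  have X: "of_real (kx I J i j) * (w (Suc i) j - w i j) + of_real (kx I J (i - 1) j) * (w (i - 1) j - w i j)
     = (if J = L \<and> j = l then F1 nx (\<lambda>P i. kx P J i j) Ixn1 Ix1n I i K k else 0)
       - of_real (kx I J i j + kx I J (i - 1) j) * (if (I, J, i, j) = (K, L, k, l) then 1 else 0)"
    unfolding wR wL wC[symmetric] F1_def of_real_add by (simp only: alg)
  have Y: "of_real (ky I J i j) * (w i (Suc j) - w i j) + of_real (ky I J i (j - 1)) * (w i (j - 1) - w i j)
     = (if I = K \<and> i = k then F1 ny (\<lambda>P j. ky I P i j) Jyn1 Jy1n J j L l else 0)
       - of_real (ky I J i j + ky I J i (j - 1)) * (if (I, J, i, j) = (K, L, k, l) then 1 else 0)"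
    unfolding wU wD wC[symmetric] F1_def of_real_add by (simp only: alg)
  show ?thesis unfolding e X Y ..
qed

end

lemma F1_half: assumes "1 \<le> i" "i \<le> n" "1 \<le> k" "k \<le> n" "\<kappa> Q 0 = \<kappa> P n" "A P Q = B Q P"
  shows "of_real (\<kappa> P i) * (if i < n then (if P = Q \<and> k = Suc i then 1 else 0) else (if k = 1 then A P Q else 0))
     = of_real (\<kappa> Q (k - 1)) * (if 1 < k then (if Q = P \<and> i = k - 1 then 1 else 0) else (if i = n then B Q P else (0::complex)))"
proof (cases "i < n")
  case True
  show ?thesis
  proof (cases "P = Q \<and> k = Suc i")
    case True2: True
    then show ?thesis using True assms by auto
  next
    case False
    then show ?thesis using True assms by auto
  qed
next
  case False
  then have "i = n" using assms by simp
  then show ?thesis using assms by (cases "1 < k") auto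
qed

lemma F1_sym: assumes "1 \<le> i" "i \<le> n" "1 \<le> k" "k \<le> n" "\<kappa> P 0 = \<kappa> Q n" "\<kappa> Q 0 = \<kappa> P n"
  "A P Q = B Q P" "A Q P = B P Q"
  shows "F1 n \<kappa> A B P i Q k = F1 n \<kappa> A B Q k P i"
  unfolding F1_def F1_half[of i n k \<kappa> Q P A B, OF assms(1-4,6,7)] F1_half[of k n i \<kappa> P Q A B, OF assms(3,4,1,2,5,8)] by (simp add: add.commute)

lemma F1_real: assumes "A P Q \<in> \<real>" "B P Q \<in> \<real>" shows "F1 n \<kappa> A B P i Q k \<in> \<real>"
  unfolding F1_def using assms by (auto intro!: Reals_add Reals_mult)

lemma interp_props: assumes "interp_coeffs N H r Cn1 C1n" "N \<ge> 1" "I < N" "K < N"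
  shows "Cn1 I K = C1n K I \<and> Cn1 I K \<in> \<real> \<and> C1n I K \<in> \<real>"
  using assms(1) unfolding interp_coeffs_def
proof (elim disjE exE conjE)
  fix M assume M: "finite M" "\<forall>m\<in>M. - m \<in> M" and e: "Cn1 = spectral_n1 N H r M" "C1n = spectral_1n N H r M"
  show ?thesis unfolding e using spec_transp[OF M, of N H r I K] spec_transp[OF M, of N H r K I]
      spec_real[OF M, of N H r I K] spec_real[OF M, of N H r K I] by simp
next
  fix P assume e: "Cn1 = (\<lambda>I J. complex_of_real (lagr_n1 N r P I J))" "C1n = (\<lambda>I J. complex_of_real (lagr_1n N r P I J))"
  show ?thesis unfolding e using lagr_transp[OF assms(2-4), of r P] by simp
qed

theorem corollary7:
  fixes Nx Ny nx ny :: nat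
    and dx dy Hx Hy :: real
    and kx ky :: "nat \<Rightarrow> nat \<Rightarrow> nat \<Rightarrow> nat \<Rightarrow> real"
    and Ixn1 Ix1n Jyn1 Jy1n :: "nat \<Rightarrow> nat \<Rightarrow> complex"
  assumes "Nx \<ge> 1" and "Ny \<ge> 1" and "nx \<ge> 1" and "ny \<ge> 1"
    and "dx > 0" and "dy > 0" and "Hx > 0" and "Hy > 0"
    and kx_per: "\<And>I K J j. I < Nx \<Longrightarrow> K < Nx \<Longrightarrow> J < Ny \<Longrightarrow> 1 \<le> j \<Longrightarrow> j \<le> ny \<Longrightarrow>
                   kx I J 0 j = kx K J nx j"
    and ky_per: "\<And>I J K i. I < Nx \<Longrightarrow> J < Ny \<Longrightarrow> K < Ny \<Longrightarrow> 1 \<le> i \<Longrightarrow> i \<le> nx \<Longrightarrow>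
                   ky I J i 0 = ky I K i ny"
    and Ix: "interp_coeffs Nx Hx (real nx * dx / Hx) Ixn1 Ix1n"
    and Jy: "interp_coeffs Ny Hy (real ny * dy / Hy) Jyn1 Jy1n"
  shows "\<forall>a\<in>interior_idx Nx Ny nx ny. \<forall>b\<in>interior_idx Nx Ny nx ny.
           patch_matrix Nx Ny nx ny dx dy kx ky Ixn1 Ix1n Jyn1 Jy1n a b \<in> \<real> \<and>
           patch_matrix Nx Ny nx ny dx dy kx ky Ixn1 Ix1n Jyn1 Jy1n a b =
           patch_matrix Nx Ny nx ny dx dy kx ky Ixn1 Ix1n Jyn1 Jy1n b a"
proof (intro ballI)
  fix a b assume ain: "a \<in> interior_idx Nx Ny nx ny" and bin: "b \<in> interior_idx Nx Ny nx ny"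
  obtain I J i j where a: "a = (I, J, i, j)" by (cases a) auto
  obtain K L k l where b: "b = (K, L, k, l)" by (cases b) auto
  have ar: "I < Nx" "J < Ny" "1 \<le> i" "i \<le> nx" "1 \<le> j" "j \<le> ny" using ain a by (auto simp: interior_idx_def)
  have br: "K < Nx" "L < Ny" "1 \<le> k" "k \<le> nx" "1 \<le> l" "l \<le> ny" using bin b by (auto simp: interior_idx_def)
  have IX: "\<And>P Q. P < Nx \<Longrightarrow> Q < Nx \<Longrightarrow> Ixn1 P Q = Ix1n Q P \<and> Ixn1 P Q \<in> \<real> \<and> Ix1n P Q \<in> \<real>"
    using interp_props[OF Ix] assms(1) by blast
  have JY: "\<And>P Q. P < Ny \<Longrightarrow> Q < Ny \<Longrightarrow> Jyn1 P Q = Jy1n Q P \<and> Jyn1 P Q \<in> \<real> \<and> Jy1n P Q \<in> \<real>"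
    using interp_props[OF Jy] assms(2) by blast
  note fab = formula[OF ar br]
  note fba = formula[OF br ar]
  have sx: "J = L \<Longrightarrow> j = l \<Longrightarrow> F1 nx (\<lambda>P i. kx P J i j) Ixn1 Ix1n I i K k = F1 nx (\<lambda>P i. kx P L i l) Ixn1 Ix1n K k I i"
  proof -
    assume e: "J = L" "j = l"
    have "F1 nx (\<lambda>P i. kx P J i j) Ixn1 Ix1n I i K k = F1 nx (\<lambda>P i. kx P J i j) Ixn1 Ix1n K k I i"
    proof (rule F1_sym)
      show "kx I J 0 j = kx K J nx j" using kx_per ar br by blast
      show "kx K J 0 j = kx I J nx j" using kx_per ar br by blast
      show "Ixn1 I K = Ix1n K I" using IX ar br by blast
      show "Ixn1 K I = Ix1n I K" using IX ar br by blast
    qed (use ar br in auto)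
    then show ?thesis using e by simp
  qed
  have sy: "I = K \<Longrightarrow> i = k \<Longrightarrow> F1 ny (\<lambda>P j. ky I P i j) Jyn1 Jy1n J j L l = F1 ny (\<lambda>P j. ky K P k j) Jyn1 Jy1n L l J j"
  proof -
    assume e: "I = K" "i = k"
    have "F1 ny (\<lambda>P j. ky I P i j) Jyn1 Jy1n J j L l = F1 ny (\<lambda>P j. ky I P i j) Jyn1 Jy1n L l J j"
    proof (rule F1_sym)
      show "ky I J i 0 = ky I L i ny" using ky_per ar br by blast
      show "ky I L i 0 = ky I J i ny" using ky_per ar br by blast
      show "Jyn1 J L = Jy1n L J" using JY ar br by blast
      show "Jyn1 L J = Jy1n J L" using JY ar br by blast
    qed (use ar br in auto)
    then show ?thesis using e by simp
  qed
  have rx: "F1 nx (\<lambda>P i. kx P J i j) Ixn1 Ix1n I i K k \<in> \<real>" using F1_real IX ar br by blast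
  have ry: "F1 ny (\<lambda>P j. ky I P i j) Jyn1 Jy1n J j L l \<in> \<real>" using F1_real JY ar br by blast
  show "patch_matrix Nx Ny nx ny dx dy kx ky Ixn1 Ix1n Jyn1 Jy1n a b \<in> \<real> \<and>
        patch_matrix Nx Ny nx ny dx dy kx ky Ixn1 Ix1n Jyn1 Jy1n a b =
        patch_matrix Nx Ny nx ny dx dy kx ky Ixn1 Ix1n Jyn1 Jy1n b a"
  proof
    show "patch_matrix Nx Ny nx ny dx dy kx ky Ixn1 Ix1n Jyn1 Jy1n a b \<in> \<real>"
      unfolding a b fab using rx ry by (auto intro!: Reals_add Reals_diff Reals_mult Reals_divide)
    show "patch_matrix Nx Ny nx ny dx dy kx ky Ixn1 Ix1n Jyn1 Jy1n a b =
        patch_matrix Nx Ny nx ny dx dy kx ky Ixn1 Ix1n Jyn1 Jy1n b a"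
      unfolding a b fab fba using sx sy by auto
  qed
qed

end
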